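(* Let $\kappa$ be a regular uncountable cardinal with $\kappa^{<\kappa}=\kappa$ and $\gamma^\omega<\kappa$ for all $\gamma<\kappa$. There is a $\kappa$-representation $\langle I^0_\alpha\mid\alpha<\kappa\rangle$ of $I^0$ such that for every limit ordinal $\delta<\kappa$ and every $\nu\in I^0$ there is $\beta<\delta$ satisfying: for every $\sigma\in I^0_\delta$ with $\sigma>\nu$ there is $\sigma'\in I^0_\beta$ with $\sigma\ge\sigma'\ge\nu$.
   Context: Let $\mathbb Q$ be the rationals and order $\kappa\times\mathbb Q$ lexicographically. $I^0$ is the set of functions $f:\omega\to\kappa\times\mathbb Q$, written $f(n)=(f_1(n),f_2(n))$, such that $\{n<\omega\mid f_1(n)\ne0\}$ is finite, ordered by $f<g$ iff $f(n)<g(n)$ for the least $n$ with $f(n)\ne g(n)$. A $\kappa$-representation of a set $A$ of size $\le\kappa$ is an increasing continuous sequence of subsets of $A$, each of size $<\kappa$, whose union is $A$. *)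

theory Defs
  imports Main "HOL-Library.Cardinality" Complex_Main
begin

text \<open>The cardinal kappa is represented by a type 'k carrying a cardinal well-order
  r (card_order r, so Field r = UNIV). Ordinals below kappa are the elements of 'k,
  ordered by r.\<close>

definition kless :: "'k rel \<Rightarrow> 'k \<Rightarrow> 'k \<Rightarrow> bool" where
  "kless r a b \<longleftrightarrow> (a, b) \<in> r \<and> a \<noteq> b"

definition kzero :: "'k rel \<Rightarrow> 'k \<Rightarrow> bool" where
  "kzero r a \<longleftrightarrow> (\<forall>b. (a, b) \<in> r)"

definition klimit :: "'k rel \<Rightarrow> 'k \<Rightarrow> bool" where
  "klimit r d \<longleftrightarrow> (\<exists>a. kless r a d) \<and> (\<forall>a. kless r a d \<longrightarrow> (\<exists>b. kless r a b \<and> kless r b d))"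

definition kq_less :: "'k rel \<Rightarrow> 'k \<times> rat \<Rightarrow> 'k \<times> rat \<Rightarrow> bool" where
  "kq_less r x y \<longleftrightarrow> kless r (fst x) (fst y) \<or> (fst x = fst y \<and> snd x < snd y)"

definition I0 :: "'k rel \<Rightarrow> (nat \<Rightarrow> 'k \<times> rat) set" where
  "I0 r = {f. finite {n. \<not> kzero r (fst (f n))}}"

definition I0_less :: "'k rel \<Rightarrow> (nat \<Rightarrow> 'k \<times> rat) \<Rightarrow> (nat \<Rightarrow> 'k \<times> rat) \<Rightarrow> bool" where
  "I0_less r f g \<longleftrightarrow> (\<exists>n. f n \<noteq> g n \<and> (\<forall>m<n. f m = g m) \<and> kq_less r (f n) (g n))"

definition I0_le :: "'k rel \<Rightarrow> (nat \<Rightarrow> 'k \<times> rat) \<Rightarrow> (nat \<Rightarrow> 'k \<times> rat) \<Rightarrow> bool" where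
  "I0_le r f g \<longleftrightarrow> I0_less r f g \<or> f = g"

definition kappa_representation :: "'k rel \<Rightarrow> 'a set \<Rightarrow> ('k \<Rightarrow> 'a set) \<Rightarrow> bool" where
  "kappa_representation r A S \<longleftrightarrow>
     (\<forall>a. S a \<subseteq> A) \<and>
     (\<forall>a. ordLess2 (card_of (S a)) r) \<and>
     (\<forall>a b. (a, b) \<in> r \<longrightarrow> S a \<subseteq> S b) \<and>
     (\<forall>d. klimit r d \<longrightarrow> S d = (\<Union>a\<in>{a. kless r a d}. S a)) \<and>
     (\<Union>a. S a) = A"

end

theory Submission imports Defs "HOL-Library.Countable" begin
unbundle cardinal_syntax

lemma co_basic:
  assumes "card_order r"
  shows "Field r = UNIV" "Card_order r" "well_order r" "trans r" "antisym r" "total r" "\<And>x. (x,x) \<in> r"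
proof -
  show F: "Field r = UNIV" using assms card_order_on_Card_order by blast
  show "Card_order r" using assms F by simp
  show W: "well_order r" using assms card_order_on_well_order_on by blast
  then show "trans r" "antisym r" "total r"
    by (auto simp: well_order_on_def linear_order_on_def partial_order_on_def preorder_on_def total_on_def)
  show "\<And>x. (x,x) \<in> r" using W by (auto simp: well_order_on_def linear_order_on_def partial_order_on_def preorder_on_def refl_on_def)
qed

lemma kless_trans:
  assumes "card_order r" "kless r a b" "kless r b c" shows "kless r a c"
  using co_basic[OF assms(1)] assms(2,3) unfolding kless_def trans_def antisym_def by blast

lemma kless_le_trans:
  assumes "card_order r" "kless r a b" "(b,c) \<in> r" shows "kless r a c"
  using co_basic[OF assms(1)] assms(2,3) unfolding kless_def trans_def antisym_def by blast

lemma k_total: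
  assumes "card_order r" shows "(a,b) \<in> r \<or> (b,a) \<in> r"
  using co_basic[OF assms(1)] unfolding total_on_def by (cases "a = b") auto

lemma k_infinite:
  fixes r :: "'k rel"
  assumes "card_order r" "ordLess2 (card_of (UNIV :: nat set)) r"
  shows "\<not> finite (UNIV :: 'k set)"
proof
  assume fin: "finite (UNIV :: 'k set)"
  have "r =o |UNIV :: 'k set|" using card_of_unique[OF assms(1)] by simp
  then have "|UNIV :: nat set| <o |UNIV :: 'k set|" using assms(2) ordLess_ordIso_trans by blast
  then have "|UNIV :: nat set| \<le>o |UNIV :: 'k set|" using ordLess_imp_ordLeq by blast
  then show False using fin card_of_ordLeq_finite by blast
qed

lemma k_nomax:
  fixes r :: "'k rel"
  assumes "card_order r" "ordLess2 (card_of (UNIV :: nat set)) r"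
  shows "\<exists>b. kless r (a::'k) b"
  using infinite_Card_order_limit[of r a] co_basic[OF assms(1)] k_infinite[OF assms]
  unfolding kless_def by auto

lemma k_upper:
  fixes r :: "'k rel"
  assumes "card_order r" "ordLess2 (card_of (UNIV :: nat set)) r" "finite V"
  shows "\<exists>b. \<forall>v\<in>V. kless r (v::'k) b"
  using assms(3)
proof (induction V rule: finite_induct)
  case empty then show ?case by auto
next
  case (insert v V)
  then obtain b where b: "\<forall>w\<in>V. kless r w b" by auto
  define c where "c = (if (v,b) \<in> r then b else v)"
  have vc: "(v,c) \<in> r" and bc: "(b,c) \<in> r"
    using k_total[OF assms(1), of v b] co_basic(7)[OF assms(1)] by (auto simp: c_def)
  obtain d where d: "kless r c d" using k_nomax[OF assms(1,2)] by blast
  have "kless r v d" using vc d assms(1) unfolding kless_def co_basic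
    by (metis antisym_def co_basic(4,5) transD)
  moreover have "\<forall>w\<in>V. kless r w d" using b bc d
    by (meson assms(1) kless_le_trans kless_trans)
  ultimately show ?case by auto
qed

lemma k_upper_lim:
  assumes "card_order r" "klimit r d" "finite V" "\<forall>v\<in>V. kless r v d"
  shows "\<exists>b. kless r b d \<and> (\<forall>v\<in>V. kless r (v::'k) b)"
  using assms(3,4)
proof (induction V rule: finite_induct)
  case empty then show ?case using assms(2) unfolding klimit_def by auto
next
  case (insert v V)
  then obtain b where b: "kless r b d" "\<forall>w\<in>V. kless r w b" by auto
  define c where "c = (if (v,b) \<in> r then b else v)"
  have vc: "(v,c) \<in> r" and bc: "(b,c) \<in> r"
    using k_total[OF assms(1), of v b] co_basic(7)[OF assms(1)] by (auto simp: c_def)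
  have cd: "kless r c d" using b insert by (auto simp: c_def)
  obtain e where e: "kless r c e" "kless r e d" using assms(2) cd unfolding klimit_def by blast
  have "kless r v e" using vc e assms(1) unfolding kless_def
    by (metis antisym_def co_basic(4,5) transD)
  moreover have "\<forall>w\<in>V. kless r w e" using b bc e
    by (meson assms(1) kless_le_trans kless_trans)
  ultimately show ?case using e by auto
qed

lemma I0_finite_range:
  assumes "card_order r" "f \<in> I0 r"
  shows "finite (range (\<lambda>n. fst (f n)))"
proof -
  have z: "finite {z. kzero r z}"
  proof (cases "\<exists>a. kzero r a")
    case True
    then obtain a where a: "kzero r a" by blast
    have "{z. kzero r z} \<subseteq> {a}" using a co_basic(5)[OF assms(1)] unfolding kzero_def antisym_def by blast
    then show ?thesis using finite_subset by blast
  next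
    case False then show ?thesis by simp
  qed
  have "range (\<lambda>n. fst (f n)) \<subseteq> (\<lambda>n. fst (f n)) ` {n. \<not> kzero r (fst (f n))} \<union> {z. kzero r z}"
    by auto
  moreover have "finite {n. \<not> kzero r (fst (f n))}" using assms(2) by (simp add: I0_def)
  ultimately show ?thesis using z by (meson finite_Un finite_imageI finite_subset)
qed

lemma t1: "inj e \<Longrightarrow> inj_on (\<lambda>(a, q::rat). (a, e (to_nat q))) (A \<times> UNIV)"
proof (rule inj_onI, clarsimp)
  fix x y :: rat assume "inj e" "e (to_nat x) = e (to_nat y)"
  then have "to_nat x = to_nat y" by (meson injD)
  then show "x = y" by simp
qed

lemma t2: fixes r :: "'k rel" assumes "(g::'k\<times>rat \<Rightarrow> 'k) ` (A \<times> UNIV) \<subseteq> B"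
  "\<And>f n. f \<in> S \<Longrightarrow> f n \<in> A \<times> UNIV"
  shows "(\<lambda>f n. g (f n)) ` S \<subseteq> Func UNIV B"
  using assms by (force simp: Func_def)

lemma t3: assumes "|UNIV :: nat set| \<le>o |UNIV :: 'k set|" shows "\<exists>e :: nat \<Rightarrow> 'k. inj e"
  using assms card_of_ordLeq[of "UNIV :: nat set" "UNIV :: 'k set"] by auto

lemma S_card:
  fixes r :: "'k rel"
  assumes card: "card_order r"
    and uncountable: "ordLess2 (card_of (UNIV :: nat set)) r"
    and omega_pow: "\<forall>A :: 'k set. ordLess2 (card_of A) r \<longrightarrow> ordLess2 (card_of (Func (UNIV :: nat set) A)) r"
  shows "|{f \<in> I0 r. \<forall>n. kless r (fst (f n)) \<alpha>}| <o r"
proof -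
  note cb = co_basic[OF card]
  define A where "A = underS r \<alpha>"
  have A: "|A| <o r" unfolding A_def using card_of_underS[OF cb(2)] cb(1) by simp
  have ro: "r =o |UNIV :: 'k set|" using card_of_unique[OF card] by simp
  have "|UNIV :: nat set| \<le>o |UNIV :: 'k set|"
    using uncountable ro ordLess_ordIso_trans ordLess_imp_ordLeq by blast
  then obtain e :: "nat \<Rightarrow> 'k" where e: "inj e" using t3 by blast
  define C where "C = range e"
  have "|C| \<le>o |UNIV :: nat set|" unfolding C_def by (rule card_of_image)
  then have C: "|C| <o r" using uncountable ordLeq_ordLess_trans by blast
  define B where "B = A \<union> C"
  have B: "|B| <o r" unfolding B_def
    using card_of_Un_ordLess_infinite_Field[OF _ cb(2) A C] k_infinite[OF card uncountable] cb(1) by simp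
  have "\<not> finite C" unfolding C_def using e finite_imageD infinite_UNIV_nat by blast
  then have Binf: "\<not> finite B" unfolding B_def by simp
  have Bne: "B \<noteq> {}" using Binf by auto
  have BB: "|B \<times> B| =o |B|" using card_of_Times_infinite[OF Binf Bne card_of_mono1[OF subset_refl]] by simp
  have "|A \<times> (UNIV :: rat set)| \<le>o |B \<times> B|"
  proof -
    have "inj_on (\<lambda>(a, q::rat). (a, e (to_nat q))) (A \<times> UNIV)"
      using t1[OF e] .
    moreover have "(\<lambda>(a, q::rat). (a, e (to_nat q))) ` (A \<times> UNIV) \<subseteq> B \<times> B"
      by (auto simp: B_def C_def)
    ultimately show ?thesis using card_of_ordLeq by blast
  qed
  then have "|A \<times> (UNIV :: rat set)| \<le>o |B|" using BB ordLeq_ordIso_trans by blast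
  then obtain g where g: "inj_on g (A \<times> (UNIV :: rat set))" "g ` (A \<times> UNIV) \<subseteq> B"
    using card_of_ordLeq[of "A \<times> (UNIV :: rat set)" B] by blast
  let ?S = "{f \<in> I0 r. \<forall>n. kless r (fst (f n)) \<alpha>}"
  have memA: "f \<in> ?S \<Longrightarrow> f n \<in> A \<times> UNIV" for f n
  proof -
    assume "f \<in> ?S"
    then have "kless r (fst (f n)) \<alpha>" by blast
    then have "fst (f n) \<in> A" by (simp add: A_def underS_def kless_def)
    then show ?thesis by (simp add: mem_Times_iff)
  qed
  have "inj_on (\<lambda>f n. g (f n)) ?S"
  proof (rule inj_onI)
    fix f1 f2 assume f1: "f1 \<in> ?S" and f2: "f2 \<in> ?S" and eq: "(\<lambda>n. g (f1 n)) = (\<lambda>n. g (f2 n))"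
    show "f1 = f2"
    proof
      fix n
      have "g (f1 n) = g (f2 n)" using eq by meson
      then show "f1 n = f2 n" using g(1) memA[OF f1] memA[OF f2] by (meson inj_onD)
    qed
  qed
  moreover have "(\<lambda>f n. g (f n)) ` ?S \<subseteq> Func UNIV B"
    using t2[OF g(2), of ?S] memA by blast
  ultimately have "|?S| \<le>o |Func (UNIV :: nat set) B|" using card_of_ordLeq by blast
  then show ?thesis using omega_pow B ordLeq_ordLess_trans by blast
qed

theorem mainTheorem8:
  fixes r :: "'k rel"
  assumes card: "card_order r"
    and regular: "regularCard r"
    and uncountable: "ordLess2 (card_of (UNIV :: nat set)) r"
    and kappa_lt_kappa: "\<forall>A :: 'k set. ordLess2 (card_of A) r \<longrightarrow> ordLeq2 (card_of (Func A (UNIV :: 'k set))) r"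
    and omega_pow: "\<forall>A :: 'k set. ordLess2 (card_of A) r \<longrightarrow> ordLess2 (card_of (Func (UNIV :: nat set) A)) r"
  shows "\<exists>S. kappa_representation r (I0 r) S \<and>
     (\<forall>d \<nu>. klimit r d \<and> \<nu> \<in> I0 r \<longrightarrow>
        (\<exists>b. kless r b d \<and>
           (\<forall>\<sigma>\<in>S d. I0_less r \<nu> \<sigma> \<longrightarrow>
              (\<exists>\<sigma>'\<in>S b. I0_le r \<sigma>' \<sigma> \<and> I0_le r \<nu> \<sigma>'))))"
proof -
  define S where "S = (\<lambda>\<alpha>. {f \<in> I0 r. \<forall>n. kless r (fst (f n)) \<alpha>})"
  have rep: "kappa_representation r (I0 r) S"
    unfolding kappa_representation_def
  proof (intro conjI allI impI)
    show "S a \<subseteq> I0 r" for a unfolding S_def by blast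
    show "|S a| <o r" for a unfolding S_def using S_card[OF card uncountable omega_pow] .
    show "S a \<subseteq> S b" if "(a, b) \<in> r" for a b
      unfolding S_def using kless_le_trans[OF card _ that] by blast
    show "S d = (\<Union>a\<in>{a. kless r a d}. S a)" if lim: "klimit r d" for d
    proof
      show "S d \<subseteq> (\<Union>a\<in>{a. kless r a d}. S a)"
      proof
        fix f assume f: "f \<in> S d"
        have "finite (range (\<lambda>n. fst (f n)))" using f I0_finite_range[OF card] unfolding S_def by blast
        moreover have "\<forall>v\<in>range (\<lambda>n. fst (f n)). kless r v d" using f unfolding S_def by blast
        ultimately obtain b where "kless r b d" "\<forall>v\<in>range (\<lambda>n. fst (f n)). kless r v b"
          using k_upper_lim[OF card lim] by blast
        then show "f \<in> (\<Union>a\<in>{a. kless r a d}. S a)" using f unfolding S_def by blast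
      qed
      show "(\<Union>a\<in>{a. kless r a d}. S a) \<subseteq> S d"
        unfolding S_def using kless_trans[OF card] by blast
    qed
    show "(\<Union>a. S a) = I0 r"
    proof
      show "(\<Union>a. S a) \<subseteq> I0 r" unfolding S_def by blast
      show "I0 r \<subseteq> (\<Union>a. S a)"
      proof
        fix f assume f: "f \<in> I0 r"
        obtain b where "\<forall>v\<in>range (\<lambda>n. fst (f n)). kless r v b"
          using k_upper[OF card uncountable I0_finite_range[OF card f]] by blast
        then show "f \<in> (\<Union>a. S a)" using f unfolding S_def by blast
      qed
    qed
  qed
  have propty: "\<exists>b. kless r b d \<and>
           (\<forall>\<sigma>\<in>S d. I0_less r \<nu> \<sigma> \<longrightarrow>
              (\<exists>\<sigma>'\<in>S b. I0_le r \<sigma>' \<sigma> \<and> I0_le r \<nu> \<sigma>'))"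
    if lim: "klimit r d" and nu: "\<nu> \<in> I0 r" for d \<nu>
  proof -
    define V where "V = {v \<in> range (\<lambda>n. fst (\<nu> n)). kless r v d}"
    have "finite V" unfolding V_def using I0_finite_range[OF card nu] by simp
    then obtain \<beta> where \<beta>: "kless r \<beta> d" "\<forall>v\<in>V. kless r v \<beta>"
      using k_upper_lim[OF card lim] unfolding V_def by blast
    have fin: "finite {n. \<not> kzero r (fst (\<nu> n))}" using nu by (simp add: I0_def)
    obtain k0 where "k0 \<notin> {n. \<not> kzero r (fst (\<nu> n))}"
      using ex_new_if_finite[OF infinite_UNIV_nat fin] by blast
    then have z: "kzero r (fst (\<nu> k0))" by simp
    define z where "z = fst (\<nu> k0)"
    have main: "\<exists>\<sigma>'\<in>S \<beta>. I0_le r \<sigma>' \<sigma> \<and> I0_le r \<nu> \<sigma>'"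
      if sS: "\<sigma> \<in> S d" and lt: "I0_less r \<nu> \<sigma>" for \<sigma>
    proof -
      obtain n where n: "\<nu> n \<noteq> \<sigma> n" "\<forall>m<n. \<nu> m = \<sigma> m" "kq_less r (\<nu> n) (\<sigma> n)"
        using lt unfolding I0_less_def by blast
      have sd: "kless r (fst (\<sigma> k)) d" for k using sS unfolding S_def by blast
      have nd: "kless r (fst (\<nu> k)) d" if "k \<le> n" for k
      proof (cases "k < n")
        case True then show ?thesis using n(2) sd by metis
      next
        case False
        then have "k = n" using that by simp
        then show ?thesis using n(3) sd kless_trans[OF card] unfolding kq_less_def by metis
      qed
      have nb: "kless r (fst (\<nu> k)) \<beta>" if "k \<le> n" for k
        using \<beta>(2) nd[OF that] unfolding V_def by blast
      define c where "c = (if fst (\<nu> n) = fst (\<sigma> n) then (snd (\<nu> n) + snd (\<sigma> n)) / 2 else snd (\<nu> n) + 1)"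
      define \<sigma>' where "\<sigma>' = (\<lambda>k. if k < n then \<nu> k else if k = n then (fst (\<nu> n), c) else (z, 0))"
      have zb: "kless r z \<beta>"
      proof -
        have 1: "(z, \<beta>) \<in> r" using z unfolding z_def kzero_def by blast
        have 2: "kless r (fst (\<nu> n)) \<beta>" using nb by simp
        have "(z, fst (\<nu> n)) \<in> r" using z unfolding z_def kzero_def by blast
        then have "z \<noteq> \<beta>" using 2 co_basic(5)[OF card] unfolding kless_def antisym_def by blast
        then show ?thesis using 1 unfolding kless_def by blast
      qed
      have "{k. \<not> kzero r (fst (\<sigma>' k))} \<subseteq> {..n}"
        using z unfolding \<sigma>'_def z_def by auto
      then have s'I: "\<sigma>' \<in> I0 r" unfolding I0_def using finite_subset by blast
      have "kless r (fst (\<sigma>' k)) \<beta>" for k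
        using nb zb unfolding \<sigma>'_def by (cases "k < n"; cases "k = n") auto
      then have s'S: "\<sigma>' \<in> S \<beta>" using s'I unfolding S_def by blast
      have c1: "snd (\<nu> n) < c" and c2: "fst (\<nu> n) = fst (\<sigma> n) \<Longrightarrow> c < snd (\<sigma> n)"
        using n(3) unfolding c_def kq_less_def kless_def by auto
      have "I0_less r \<sigma>' \<sigma>"
        unfolding I0_less_def
      proof (intro exI[of _ n] conjI)
        show "\<forall>m<n. \<sigma>' m = \<sigma> m" using n(2) unfolding \<sigma>'_def by simp
        show "kq_less r (\<sigma>' n) (\<sigma> n)"
        proof (cases "fst (\<nu> n) = fst (\<sigma> n)")
          case True then show ?thesis using c2 unfolding \<sigma>'_def kq_less_def by simp
        next
          case False then show ?thesis using n(3) unfolding \<sigma>'_def kq_less_def by simp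
        qed
        then show "\<sigma>' n \<noteq> \<sigma> n" unfolding kq_less_def kless_def by auto
      qed
      moreover have "I0_less r \<nu> \<sigma>'"
        unfolding I0_less_def
      proof (intro exI[of _ n] conjI)
        show "\<forall>m<n. \<nu> m = \<sigma>' m" unfolding \<sigma>'_def by simp
        show "kq_less r (\<nu> n) (\<sigma>' n)" using c1 unfolding \<sigma>'_def kq_less_def by simp
        then show "\<nu> n \<noteq> \<sigma>' n" unfolding kq_less_def kless_def by auto
      qed
      ultimately show ?thesis using s'S unfolding I0_le_def by blast
    qed
    show ?thesis using \<beta>(1) main by blast
  qed
  show ?thesis using rep propty by blast
qed

end
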